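(* Let $q=2^n$ with $n\ge 1$, and let $\mathbb{K}=\mathbb{F}_q(Y)$ where $Y$ is transcendental over $\mathbb{F}_q$. If $k>0$ is odd, then the polynomial $G(X)=\prod_{w\in\mathbb{F}_q^\times}\bigl(D_k(wX)-Y\bigr)\in\mathbb{K}[X]$ has no repeated roots in an algebraic closure $\overline{\mathbb{K}}$ of $\mathbb{K}$.
   Context: The $k$th Dickson polynomial $D_k(x)\in\mathbb{Z}[x]$ is defined by $D_0(x)=2$, $D_1(x)=x$, and $D_k(x)=xD_{k-1}(x)-D_{k-2}(x)$ for $k\ge 2$; equivalently it satisfies $D_k(u+1/u)=u^k+u^{-k}$. Here $D_k$ is regarded as a polynomial over $\mathbb{F}_q$ via reduction of its integer coefficients modulo $2$. *)

theory Defs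
  imports "HOL-Computational_Algebra.Computational_Algebra" "HOL-Library.Cardinality"
begin

text \<open>Dickson polynomials D_0 = 2, D_1 = X, D_(k+2) = X * D_(k+1) - D_k, over any
  commutative ring; over a ring of characteristic 2 this is the reduction mod 2 of the
  integer Dickson polynomial.\<close>
fun dickson :: "nat \<Rightarrow> 'a::comm_ring_1 poly" where
  "dickson 0 = [:2:]"
| "dickson (Suc 0) = [:0, 1:]"
| "dickson (Suc (Suc k)) = [:0, 1:] * dickson (Suc k) - dickson k"

text \<open>The rational function field F_q(Y) is modelled as \<open>'a poly fract\<close>;
  constants of F_q and the transcendental Y embed as follows.\<close>
definition const_rf :: "'a::field \<Rightarrow> 'a poly fract" where
  "const_rf c = Fract [:c:] 1"

definition Y_rf :: "'a::field poly fract" where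
  "Y_rf = Fract [:0, 1:] 1"

definition G_poly :: "nat \<Rightarrow> ('a::{finite,field}) poly fract poly" where
  "G_poly k = (\<Prod>w\<in>UNIV - {0::'a}. pcompose (dickson k) [:0, const_rf w:] - [:Y_rf:])"

end

theory Submission
  imports Defs
begin


lemma dickson_deriv:
  assumes two: "(2::'b::idom) = 0"
  shows "(odd k \<longrightarrow> (dickson k :: 'b poly) = [:0,1:] * pderiv (dickson k)) \<and>
         (even k \<longrightarrow> pderiv (dickson k :: 'b poly) = 0)"
proof (induction k rule: dickson.induct)
  case 1
  then show ?case by (simp add: pderiv_pCons)
next
  case 2
  then show ?case by (simp add: pderiv_pCons)
next
  case (3 k)
  have r: "(dickson (Suc (Suc k)) :: 'b poly) = [:0,1:] * dickson (Suc k) - dickson k" by simp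
  have two': "(2::'b poly) = 0" by (metis two of_nat_numeral of_nat_poly pCons_0_0 )
  have dd: "p + p = 0" for p :: "'b poly"
    by (metis mult_2 mult_zero_left two')
  have pd0: "pderiv (dickson (Suc (Suc k)) :: 'b poly) = dickson (Suc k) + [:0,1:] * pderiv (dickson (Suc k)) - pderiv (dickson k)"
    unfolding r by (simp add: pderiv_mult pderiv_diff pderiv_pCons)
  show ?case
  proof (cases "odd k")
    case True
    have ev: "even (Suc k)" using True by simp
    have e: "pderiv (dickson (Suc k) :: 'b poly) = 0" and o: "(dickson k :: 'b poly) = [:0,1:] * pderiv (dickson k)"
      using 3 True ev by blast+
    have pd: "pderiv (dickson (Suc (Suc k)) :: 'b poly) = dickson (Suc k) - pderiv (dickson k)"
      using pd0 e by simp
    have "[:0,1:] * pderiv (dickson (Suc (Suc k)) :: 'b poly) = [:0,1:] * dickson (Suc k) - [:0,1:] * pderiv (dickson k)"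
      by (simp only: pd right_diff_distrib)
    also have "\<dots> = dickson (Suc (Suc k))" by (subst r) (simp only: o[symmetric])
    finally have fin: "[:0,1:] * pderiv (dickson (Suc (Suc k)) :: 'b poly) = dickson (Suc (Suc k))" .
    have "odd (Suc (Suc k))" using True by simp
    then show ?thesis using fin by simp
  next
    case False
    have od: "odd (Suc k)" using False by simp
    have o: "(dickson (Suc k) :: 'b poly) = [:0,1:] * pderiv (dickson (Suc k))" and e: "pderiv (dickson k :: 'b poly) = 0"
      using 3 False od by blast+
    have "pderiv (dickson (Suc (Suc k)) :: 'b poly) = 0"
      using pd0 e o dd by (metis diff_zero)
    then show ?thesis using False by simp
  qed
qed

lemma dickson_sq:
  assumes two: "(2::'b::comm_ring_1) = 0"
  shows "poly (dickson k) (x^2) = (poly (dickson k) (x::'b))^2"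
proof (induction k rule: dickson.induct)
  case 1
  then show ?case using two by simp
next
  case 2
  then show ?case by simp
next
  case (3 k)
  have sq: "(a - b)^2 = a^2 + b^2" for a b :: 'b
  proof -
    have "(a - b)^2 = a^2 + b^2 - 2 * a * b" by (simp add: power2_eq_square algebra_simps)
    moreover have "b + b = 0" by (metis mult_2 mult_zero_left two)
    then have "-b = b" by (simp add: add_eq_0_iff)
    ultimately show ?thesis using two by simp
  qed
  show ?case using 3 two by (simp add: sq power_mult_distrib)
qed

lemma dickson_high: "j > k \<Longrightarrow> coeff (dickson k :: 'b::comm_ring_1 poly) j = 0"
proof (induction k arbitrary: j rule: dickson.induct)
  case (3 k)
  then show ?case by (cases j) (auto simp: coeff_pCons)
qed (auto simp: coeff_pCons split: nat.splits)

lemma dickson_lead: "k > 0 \<Longrightarrow> coeff (dickson k :: 'b::comm_ring_1 poly) k = 1"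
proof (induction k rule: dickson.induct)
  case (3 k)
  then show ?case by (cases k) (auto simp: dickson_high)
qed (auto)

lemma dickson_sub: "coeff (dickson (Suc (Suc k)) :: 'b::comm_ring_1 poly) k = - of_nat (k+2)"
proof (induction k)
  case 0
  then show ?case by simp
next
  case (Suc m)
  have "coeff (dickson (Suc (Suc (Suc m))) :: 'b poly) (Suc m) =
        coeff (dickson (Suc (Suc m)) :: 'b poly) m - coeff (dickson (Suc m) :: 'b poly) (Suc m)"
    by (simp del: dickson.simps(3) add: dickson.simps(3)[of "Suc m"])
  also have "\<dots> = - of_nat (m+2) - 1" using Suc dickson_lead[of "Suc m", where 'b='b] by simp
  finally show ?case by simp
qed

lemma even_card_invol:
  assumes "finite A" "\<And>x. x \<in> A \<Longrightarrow> g x \<in> A" "\<And>x. x \<in> A \<Longrightarrow> g (g x) = x"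
    "\<And>x. x \<in> A \<Longrightarrow> g x \<noteq> x"
  shows "even (card A)"
  using assms
proof (induction "card A" arbitrary: A rule: less_induct)
  case less
  show ?case
  proof (cases "A = {}")
    case True then show ?thesis by simp
  next
    case False
    then obtain x where x: "x \<in> A" by blast
    have gx: "g x \<in> A" "g x \<noteq> x" using less.prems(2,4) x by auto
    define B where "B = A - {x, g x}"
    have sub: "{x, g x} \<subseteq> A" using x gx by blast
    have c2: "card {x, g x} = 2" using gx by simp
    have cB: "card B = card A - 2"
      unfolding B_def using sub c2 less.prems(1) by (simp add: card_Diff_subset)
    have cA: "card A \<ge> 2" using sub c2 less.prems(1) by (metis card_mono)
    have "even (card B)"
    proof (rule less(1))
      show "card B < card A" using cB cA by simp
      show "finite B" unfolding B_def using less.prems(1) by simp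
    next
      fix y assume y: "y \<in> B"
      then have yA: "y \<in> A" and yx: "y \<noteq> x" and ygx: "y \<noteq> g x" unfolding B_def by auto
      have "g y \<in> A" using less.prems(2) yA .
      moreover have "g y \<noteq> x" using less.prems(3) yA ygx by metis
      moreover have "g y \<noteq> g x" using less.prems(3) yA x yx by metis
      ultimately show "g y \<in> B" unfolding B_def by simp
      show "g (g y) = y" using less.prems(3) yA .
      show "g y \<noteq> y" using less.prems(4) yA .
    qed
    then show ?thesis using cB cA by (simp add: even_diff_nat)
  qed
qed

lemma char2_of_card:
  assumes "CARD('a::{finite,field}) = 2 ^ n" "n \<ge> 1"
  shows "(2::'a) = 0"
proof (rule ccontr)
  assume h: "(2::'a) \<noteq> 0"
  have "even (card (UNIV - {0::'a}))"
  proof (rule even_card_invol[where g = uminus])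
    fix x :: 'a assume "x \<in> UNIV - {0}"
    then show "- x \<noteq> x" using h
      by (metis DiffD2 add_eq_0_iff equation_minus_iff insertI1 mult_2 mult_eq_0_iff)
  qed auto
  moreover have "card (UNIV - {0::'a}) = 2 ^ n - 1"
    using assms by (simp add: card_Diff_subset)
  moreover have "even ((2::nat) ^ n)" using assms by simp
  moreover have "(2::nat) ^ n \<ge> 1" by simp
  ultimately have "even ((2::nat)^n - 1)" by simp
  then show False using \<open>even ((2::nat) ^ n)\<close> \<open>(2::nat)^n \<ge> 1\<close> by (simp add: even_diff_nat)
qed



context
  fixes f :: "'a::field \<Rightarrow> 'b::field"
  assumes f0: "f 0 = 0" and f1: "f 1 = 1" and fadd: "\<And>x y. f (x+y) = f x + f y"
    and fmul: "\<And>x y. f (x*y) = f x * f y"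
begin

lemma fneg: "f (-x) = - f x"
proof -
  have "f x + f (-x) = 0" using fadd[of x "-x"] f0 by simp
  then show ?thesis using neg_eq_iff_add_eq_0[of "f x" "f (-x)"] by simp
qed

lemma fdiff: "f (x - y) = f x - f y"
  using fadd[of x "-y"] fneg[of y] by simp

lemma fnz: "x \<noteq> 0 \<Longrightarrow> f x \<noteq> 0"
proof
  assume x: "x \<noteq> 0" and fx: "f x = 0"
  have "f (x * inverse x) = f x * f (inverse x)" by (rule fmul)
  moreover have "x * inverse x = 1" using x by simp
  ultimately have "f 1 = 0" using fx by simp
  then show False using f1 by simp
qed

lemma finj: "f x = f y \<Longrightarrow> x = y"
proof -
  assume h: "f x = f y"
  have "f (x - y) = 0" using fdiff[of x y] h by simp
  then have "x - y = 0" using fnz by blast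
  then show "x = y" by simp
qed

lemma fpow: "f (x ^ m) = f x ^ m"
  by (induction m) (simp_all add: f1 fmul)

lemma f2: "f 2 = 2"
proof -
  have "(2::'a) = 1 + 1" by simp
  then have "f 2 = f 1 + f 1" using fadd by metis
  then show ?thesis using f1 by simp
qed

lemma mp_add: "map_poly f (p + q) = map_poly f p + map_poly f q"
  by (rule poly_eqI) (simp add: coeff_map_poly f0 fadd)

lemma mp_diff: "map_poly f (p - q) = map_poly f p - map_poly f q"
  by (rule poly_eqI) (simp add: coeff_map_poly f0 fdiff)

lemma mp_const: "map_poly f [:c:] = [:f c:]"
  by (simp add: map_poly_pCons f0)

lemma mp_mult: "map_poly f (p * q) = map_poly f p * map_poly f q"
  by (induction p) (simp_all add: map_poly_pCons f0 map_poly_smult fmul mp_add)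

lemma mp_prod: "map_poly f (\<Prod>x\<in>A. g x) = (\<Prod>x\<in>A. map_poly f (g x))"
  by (induction A rule: infinite_finite_induct) (simp_all add: mp_mult f1)

lemma mp_pcompose: "map_poly f (pcompose p q) = pcompose (map_poly f p) (map_poly f q)"
  by (induction p) (simp_all add: pcompose_pCons map_poly_pCons f0 mp_add mp_mult mp_const)

lemma mp_dickson: "map_poly f (dickson k) = dickson k"
  by (induction k rule: dickson.induct) (simp_all add: mp_const mp_diff mp_mult f2 map_poly_pCons f0 f1)

end

lemma pderiv_root2:
  fixes p :: "'b::field poly"
  assumes "p \<noteq> 0" "order a p \<ge> 2"
  shows "poly (pderiv p) a = 0"
proof -
  have "[:-a,1:]^2 dvd p" using assms order_divides by blast
  then obtain r where r: "p = [:-a,1:]^2 * r" by (elim dvdE)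
  define q where "q = [:-a,1:]"
  have q: "poly q a = 0" unfolding q_def by simp
  have "p = q^2 * r" unfolding q_def by (rule r)
  then have "p = q * (q * r)" by (simp only: power2_eq_square mult.assoc)
  then show ?thesis by (simp only: pderiv_mult poly_mult poly_add q mult_zero_left mult_zero_right add_0)
qed

lemma simple_roots:
  fixes c y :: "'b::field"
  assumes two: "(2::'b) = 0" and k: "odd k" and c: "c \<noteq> 0" and y: "y \<noteq> 0"
  shows "pcompose (dickson k) [:0,c:] - [:y:] \<noteq> 0"
    and "order a (pcompose (dickson k) [:0,c:] - [:y:]) \<le> 1"
proof -
  let ?D = "dickson k :: 'b poly"
  let ?P = "pcompose ?D [:0,c:] - [:y:]"
  have D: "?D = [:0,1:] * pderiv ?D" using dickson_deriv[OF two] k by blast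
  have Dx: "poly ?D x = x * poly (pderiv ?D) x" for x
    by (subst D) simp
  have "poly ?P 0 = - y" using Dx[of 0] by (simp add: poly_pcompose)
  then show nz: "?P \<noteq> 0" using y by auto
  show "order a ?P \<le> 1"
  proof (rule ccontr)
    assume "\<not> order a ?P \<le> 1"
    then have o2: "order a ?P \<ge> 2" by simp
    then have "order a ?P \<noteq> 0" by simp
    then have r: "poly ?P a = 0" using order_root by blast
    have "poly (pderiv ?P) a = 0" using pderiv_root2[OF nz o2] .
    then have "poly (pderiv ?D) (a * c) * c = 0"
      by (auto simp add: pderiv_pcompose pderiv_diff poly_pcompose pderiv_pCons)
    then have "poly (pderiv ?D) (a * c) = 0" using assms(3) by auto
    then have "poly ?D (a * c) = 0" using Dx by simp
    then show False using r y by (simp add: poly_pcompose)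
  qed
qed

lemma char2_sq1: "(2::'b::field) = 0 \<Longrightarrow> e^2 = 1 \<Longrightarrow> e = (1::'b)"
proof -
  assume two: "(2::'b) = 0" and e: "e^2 = 1"
  have "(e - 1)^2 = e^2 - 2*e + 1" by (simp add: power2_eq_square algebra_simps)
  also have "\<dots> = 0" using two e by simp
  finally show ?thesis by simp
qed

lemma char2_pow_ne1: "(2::'b::field) = 0 \<Longrightarrow> e \<noteq> 1 \<Longrightarrow> e ^ (2^m) \<noteq> (1::'b)"
proof (induction m)
  case (Suc m)
  have "e ^ (2 ^ Suc m) = (e ^ (2^m))^2" by (simp add: power_mult[symmetric] mult.commute)
  then show ?case using Suc char2_sq1[of "e^(2^m)"] by auto
qed simp

lemma char2_odd: "(2::'b::comm_ring_1) = 0 \<Longrightarrow> odd k \<Longrightarrow> (of_nat k :: 'b) = 1"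
proof -
  assume two: "(2::'b) = 0" and k: "odd k"
  then obtain m where "k = 2*m + 1" using oddE by blast
  then show ?thesis using two by simp
qed

lemma diff_nz:
  fixes e :: "'b::field"
  assumes two: "(2::'b) = 0" and k: "odd k" and e: "e \<noteq> 1"
  shows "dickson k - pcompose (dickson k) [:0,e:] \<noteq> 0"
proof
  assume h: "dickson k - pcompose (dickson k) [:0,e:] = 0"
  have cf: "(1 - e^j) * coeff (dickson k :: 'b poly) j = 0" for j
    using arg_cong[OF h, of "\<lambda>p. coeff p j"] by (simp add: coeff_pcompose_linear algebra_simps)
  have k0: "k > 0" using k by presburger
  have ek: "e ^ k = 1" using cf[of k] dickson_lead[OF k0, where 'b='b] by simp
  show False
  proof (cases "k = 1")
    case True then show False using ek e by simp
  next
    case False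
    have "k \<ge> 2" using k0 False by simp
    then obtain j where j: "k = Suc (Suc j)" by (metis add_2_eq_Suc le_Suc_ex)
    have c1: "coeff (dickson k :: 'b poly) j = - of_nat (j+2)" unfolding j by (rule dickson_sub)
    have "j + 2 = k" using j by simp
    then have c2: "(of_nat (j+2)::'b) = 1" using char2_odd[OF two k] by simp
    have "coeff (dickson k :: 'b poly) j = - 1" by (simp only: c1 c2)
    then have ej: "e ^ j = 1" using cf[of j] by simp
    have "e^2 * e^j = 1" using ek j by (simp add: power_add[symmetric])
    then have "e^2 = 1" using ej by simp
    then show False using char2_sq1[OF two] e by blast
  qed
qed

lemma dickson_pow2: "(2::'b::comm_ring_1) = 0 \<Longrightarrow> poly (dickson k) (x^(2^m)) = (poly (dickson k) (x::'b))^(2^m)"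
proof (induction m)
  case (Suc m)
  have "x^(2^Suc m) = (x^(2^m))^2" by (simp add: power_mult[symmetric] mult.commute)
  then show ?case using Suc dickson_sq[OF Suc.prems, of k "x^(2^m)"]
    by (simp add: power_mult[symmetric] mult.commute)
qed simp



lemma const_rf_mult: "const_rf (a * b) = const_rf a * (const_rf b :: 'a::field poly fract)"
  by (simp add: const_rf_def mult.commute)

lemma const_rf_1: "const_rf 1 = (1 :: 'a::field poly fract)"
  by (simp add: const_rf_def One_fract_def flip: one_pCons)

lemma const_rf_pow: "const_rf (a ^ m) = (const_rf a :: 'a::field poly fract) ^ m"
  by (induction m) (simp_all add: const_rf_1 const_rf_mult)

lemma const_rf_eq: "const_rf a = (const_rf b :: 'a::field poly fract) \<longleftrightarrow> a = b"
  by (simp add: const_rf_def eq_fract)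

lemma const_rf_0: "const_rf 0 = (0 :: 'a::field poly fract)"
  by (simp add: const_rf_def Zero_fract_def)

lemma Y_pow: "Y_rf ^ m = (Fract ([:0,1:] ^ m) 1 :: 'a::field poly fract)"
  by (induction m) (simp_all add: Y_rf_def One_fract_def)

lemma Y_pow_inj: "Y_rf ^ m1 = (Y_rf ^ m2 :: 'a::field poly fract) \<Longrightarrow> m1 = m2"
proof -
  assume "Y_rf ^ m1 = (Y_rf ^ m2 :: 'a::field poly fract)"
  then have "([:0,1:] ^ m1 :: 'a poly) = [:0,1:] ^ m2" by (simp add: Y_pow eq_fract)
  then have "degree ([:0,1:] ^ m1 :: 'a poly) = degree ([:0,1:] ^ m2 :: 'a poly)" by simp
  then show "m1 = m2" by (simp add: degree_power_eq)
qed

lemma Y_nz: "Y_rf \<noteq> (0 :: 'a::field poly fract)"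
  by (simp add: Y_rf_def Zero_fract_def eq_fract)

lemma two_fract: "(2::'a::field) = 0 \<Longrightarrow> (2::'a poly fract) = 0"
proof -
  assume two: "(2::'a) = 0"
  have "(2::'a poly) = 0" by (metis two of_nat_numeral of_nat_poly pCons_0_0)
  then have "(of_nat 2::'a poly) = 0" by simp
  then have "(of_nat 2::'a poly fract) = 0" by (simp add: of_nat_fract Zero_fract_def)
  then show ?thesis by simp
qed



theorem lemma2:
  fixes n k :: nat
    and f :: "('a::{finite,field}) poly fract \<Rightarrow> 'L::alg_closed_field"
  assumes "n \<ge> 1"
    and "CARD('a) = 2 ^ n"
    and "odd k" and "k > 0"
    and "f 0 = 0" and "f 1 = 1"
    and "\<And>x y. f (x + y) = f x + f y"
    and "\<And>x y. f (x * y) = f x * f y"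
  shows "rsquarefree (map_poly f (G_poly k :: 'a poly fract poly))"
proof -
  note H = assms(5) assms(6) assms(7) assms(8)
  have two_a: "(2::'a) = 0" using char2_of_card assms(1,2) by blast
  have two_L: "(2::'L) = 0"
    using f2[of f, OF H] two_fract[OF two_a] assms(5) by simp
  have fnzL: "x \<noteq> 0 \<Longrightarrow> f x \<noteq> 0" for x using fnz[of f, OF H] by blast
  have finjL: "f x = f x' \<Longrightarrow> x = x'" for x x' using finj[of f, OF H] by blast
  define c where "c w = f (const_rf w)" for w :: 'a
  define y where "y = f Y_rf"
  define D where "D = (dickson k :: 'L poly)"
  define P where "P w = pcompose D [:0, c w:] - [:y:]" for w
  have y0: "y \<noteq> 0" unfolding y_def using fnzL Y_nz by blast
  have c0: "c w \<noteq> 0" if "w \<noteq> 0" for w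
    unfolding c_def using fnzL that const_rf_eq[of w 0] const_rf_0 by metis
  have c1: "c 1 = 1" unfolding c_def by (simp add: const_rf_1 assms(6))
  have cinj: "c w = c w' \<Longrightarrow> w = w'" for w w' unfolding c_def using finjL const_rf_eq by metis
  have cmult: "c (w * w') = c w * c w'" for w w' unfolding c_def using const_rf_mult assms(8) by metis
  have cpow: "c (w ^ m) = c w ^ m" for w m unfolding c_def using const_rf_pow fpow[of f, OF H] by metis
  have Gm: "map_poly f (G_poly k) = (\<Prod>w\<in>UNIV - {0}. P w)"
    unfolding G_poly_def mp_prod[of f, OF H] P_def D_def c_def y_def
    by (simp add: mp_diff[of f, OF H] mp_pcompose[of f, OF H] mp_dickson[of f, OF H]
        mp_const[of f, OF H] map_poly_pCons assms(5))
  have Pnz: "P w \<noteq> 0" if "w \<noteq> 0" for w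
    unfolding P_def D_def using simple_roots(1)[OF two_L assms(3) c0[OF that] y0] .
  have Pord: "order a (P w) \<le> 1" if "w \<noteq> 0" for w a
    unfolding P_def D_def using simple_roots(2)[OF two_L assms(3) c0[OF that] y0] .
  have disj: False if w: "w \<noteq> 0" "w' \<noteq> 0" "w \<noteq> w'" and r: "poly (P w) a = 0" "poly (P w') a = 0" for w w' a
  proof -
    define d where "d = w' / w"
    have d0: "d \<noteq> 0" unfolding d_def using w by simp
    have d1: "d \<noteq> 1" unfolding d_def using w by simp
    have w': "w' = d * w" unfolding d_def using w by simp
    define z where "z = a * c w"
    have Dz: "poly D z = y" using r(1) unfolding P_def z_def by (simp add: poly_pcompose)
    have Ddz: "poly D (c d * z) = y" using r(2) unfolding P_def z_def w' cmult
      by (simp add: poly_pcompose mult_ac)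
    define T where "T = (\<Union>e\<in>UNIV - {0,1::'a}. {x. poly (D - pcompose D [:0, c e:]) x = 0})"
    have finT: "finite T" unfolding T_def
    proof (rule finite_UN_I)
      show "finite (UNIV - {0,1::'a})" by simp
      fix e :: 'a assume "e \<in> UNIV - {0,1}"
      then have "c e \<noteq> 1" using cinj c1 by auto
      then show "finite {x. poly (D - pcompose D [:0, c e:]) x = 0}"
        unfolding D_def by (intro poly_roots_finite diff_nz[OF two_L assms(3)])
    qed
    have Dpow: "poly D (x^(2^m)) = (poly D x)^(2^m)" for x m
      unfolding D_def by (rule dickson_pow2[OF two_L])
    have memT: "z^(2^m) \<in> T" for m
    proof -
      define e where "e = d^(2^m)"
      have e0: "e \<noteq> 0" unfolding e_def using d0 by simp
      have e1: "e \<noteq> 1" unfolding e_def using char2_pow_ne1[OF two_a d1] .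
      have "z^(2^m) * c e = (c d * z)^(2^m)" unfolding e_def cpow by (simp add: power_mult_distrib mult_ac)
      then have "poly (D - pcompose D [:0, c e:]) (z^(2^m)) = 0"
        by (simp add: poly_pcompose Dpow Dz Ddz)
      then show ?thesis unfolding T_def using e0 e1 by blast
    qed
    have "range (\<lambda>m. z^(2^m)) \<subseteq> T" using memT by blast
    then have "finite (range (\<lambda>m::nat. z^(2^m)))" using finT finite_subset by blast
    then have "\<not> inj (\<lambda>m::nat. z^(2^m))" using range_inj_infinite by blast
    then obtain m1 m2 :: nat where m: "m1 \<noteq> m2" "z^(2^m1) = z^(2^m2)" unfolding inj_def by blast
    have "y^(2^m1) = y^(2^m2)" using m(2) Dpow[of z m1] Dpow[of z m2] Dz by simp
    then have "f (Y_rf^(2^m1)) = f (Y_rf^(2^m2))" unfolding y_def fpow[of f, OF H] .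
    then have "(2::nat)^m1 = 2^m2" using finjL Y_pow_inj by blast
    then show False using m(1) by simp
  qed
  let ?W = "UNIV - {0::'a}"
  have prodnz: "(\<Prod>w\<in>?W. P w) \<noteq> 0" using Pnz by (simp add: prod_zero_iff)
  have ordsum: "order a (\<Prod>w\<in>A. P w) = (\<Sum>w\<in>A. order a (P w))" if "A \<subseteq> ?W" for a A
    using that
  proof (induction A rule: infinite_finite_induct)
    case (infinite A)
    then show ?case by simp
  next
    case empty
    then show ?case by (simp add: order_1_eq_0)
  next
    case (insert x F)
    have "P x * (\<Prod>w\<in>F. P w) \<noteq> 0" using insert Pnz by (auto simp add: prod_zero_iff)
    then show ?case using insert by (simp add: order_mult)
  qed
  show ?thesis
    unfolding rsquarefree_def Gm
  proof (intro conjI allI prodnz)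
    fix a
    have "(\<Sum>w\<in>?W. order a (P w)) \<le> 1"
    proof (cases "\<exists>w0\<in>?W. order a (P w0) \<noteq> 0")
      case True
      then obtain w0 where w0: "w0 \<in> ?W" "order a (P w0) \<noteq> 0" by blast
      have others: "order a (P w) = 0" if "w \<in> ?W - {w0}" for w
      proof (rule ccontr)
        assume "order a (P w) \<noteq> 0"
        then have "poly (P w) a = 0" using order_root by blast
        moreover have "poly (P w0) a = 0" using w0 order_root by blast
        ultimately show False using disj[of w0 w a] that w0 by auto
      qed
      have "(\<Sum>w\<in>?W. order a (P w)) = order a (P w0) + (\<Sum>w\<in>?W - {w0}. order a (P w))"
        using w0 by (simp add: sum.remove)
      also have "\<dots> = order a (P w0)" using others by simp
      also have "\<dots> \<le> 1" using Pord w0 by simp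
      finally show ?thesis .
    next
      case False
      then show ?thesis by simp
    qed
    then have "order a (\<Prod>w\<in>?W. P w) \<le> 1" using ordsum[of ?W a] by simp
    then show "order a (\<Prod>w\<in>?W. P w) = 0 \<or> order a (\<Prod>w\<in>?W. P w) = 1" by linarith
  qed
qed

end
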